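(* Let $p$ be a prime and $R$ a commutative $\mathbb{Q}$-algebra. Let $c_1,c_2,\dots\in R$, and let $X(t)=\sum_{n\ge0}x_nt^n$ and $C(t)=\sum_{n\ge1}\frac{c_n}{n}t^n$ in $R[[t]]$ satisfy $X(t)=\exp(C(t))$; in particular $x_0=1$. Let $U(t)=\sum_{n\ge0}x_{pn}t^{pn}$ be the $p$-singular part and $V(t)=\sum_{p\nmid n}x_nt^n$ the $p$-regular part of $X$. Define $Y(t)=\sum_{n\ge0}y_nt^n=V(t)/U(t)$. Then: (1) $y_n=0$ whenever $p\mid n$; (2) for every $n$, $y_n$ is a polynomial with rational coefficients in the $c_i$ with $p\nmid i$; (3) for every $n\ge1$, $y_n-x_n$ is a $\mathbb{Z}$-linear combination of products $x_\lambda=x_{\lambda_1}x_{\lambda_2}\cdots x_{\lambda_r}$, where $\lambda=(\lambda_1,\dots,\lambda_r)$ runs over partitions of $n$ having at least one part divisible by $p$.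
   Context: For a formal power series $Z(t)=\sum_{n\ge0}z_nt^n$, its $p$-regular part is $\sum_{p\nmid n}z_nt^n$ (which contains no constant term) and its $p$-singular part is $\sum_{n\ge0}z_{pn}t^{pn}$. *)

theory Defs
  imports "HOL-Computational_Algebra.Formal_Power_Series" "HOL-Library.Poly_Mapping"
    "HOL-Library.Multiset"
begin

definition rinv :: "'a::comm_ring_1 \<Rightarrow> 'a" where
  "rinv a = (THE y. a * y = 1)"

text \<open>A commutative ring R is a Q-algebra iff every positive integer is a unit in R;
  the Q-algebra structure is then unique and given by the following map.\<close>
definition is_Q_algebra :: "'a::comm_ring_1 itself \<Rightarrow> bool" where
  "is_Q_algebra _ \<longleftrightarrow> (\<forall>n::nat. n > 0 \<longrightarrow> (of_nat n :: 'a) dvd 1)"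

definition of_rat_alg :: "rat \<Rightarrow> 'a::comm_ring_1" where
  "of_rat_alg q = of_int (fst (quotient_of q)) * rinv (of_int (snd (quotient_of q)))"

definition log_series :: "(nat \<Rightarrow> 'a::comm_ring_1) \<Rightarrow> 'a fps" where
  "log_series c = Abs_fps (\<lambda>n. if n = 0 then 0 else c n * rinv (of_nat n))"

text \<open>exp(F) = sum_k F^k / k! for F with zero constant term (the k > n terms
  contribute nothing to the n-th coefficient).\<close>
definition fps_exp_alg :: "'a::comm_ring_1 fps \<Rightarrow> 'a fps" where
  "fps_exp_alg F = Abs_fps (\<lambda>n. \<Sum>k\<le>n. fps_nth (F ^ k) n * rinv (of_nat (fact k)))"

definition fps_psing :: "nat \<Rightarrow> 'a::comm_ring_1 fps \<Rightarrow> 'a fps" where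
  "fps_psing p Z = Abs_fps (\<lambda>n. if p dvd n then fps_nth Z n else 0)"

definition fps_preg :: "nat \<Rightarrow> 'a::comm_ring_1 fps \<Rightarrow> 'a fps" where
  "fps_preg p Z = Abs_fps (\<lambda>n. if p dvd n then 0 else fps_nth Z n)"

definition fps_quot :: "'a::comm_ring_1 fps \<Rightarrow> 'a fps \<Rightarrow> 'a fps" where
  "fps_quot V U = (THE Y. U * Y = V)"

text \<open>Multivariate polynomials with rational coefficients in variables indexed by nat:
  finitely supported maps from monomials (finitely supported exponent vectors) to rat.\<close>
type_synonym ratpoly = "(nat \<Rightarrow>\<^sub>0 nat) \<Rightarrow>\<^sub>0 rat"

definition ratpoly_eval :: "ratpoly \<Rightarrow> (nat \<Rightarrow> 'a::comm_ring_1) \<Rightarrow> 'a" where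
  "ratpoly_eval P c = (\<Sum>m\<in>Poly_Mapping.keys P. of_rat_alg (Poly_Mapping.lookup P m) *
     (\<Prod>i\<in>Poly_Mapping.keys (m :: nat \<Rightarrow>\<^sub>0 nat). c i ^ Poly_Mapping.lookup m i))"

definition ratpoly_vars :: "ratpoly \<Rightarrow> nat set" where
  "ratpoly_vars P = (\<Union>m\<in>Poly_Mapping.keys P. Poly_Mapping.keys m)"

definition is_partition :: "nat multiset \<Rightarrow> nat \<Rightarrow> bool" where
  "is_partition lam n \<longleftrightarrow> (\<forall>k\<in>#lam. k > 0) \<and> sum_mset lam = n"

end

theory Submission
  imports Defs
begin

lemma rinv_unit: fixes u :: "'a::comm_ring_1" assumes "u dvd 1" shows "u * rinv u = 1"
proof -
  obtain v where v: "1 = u * v" using assms by (auto elim: dvdE)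
  have "\<exists>!y. u * y = 1"
  proof
    show "u * v = 1" using v by simp
    fix y assume "u * y = 1"
    thus "y = v" by (metis mult.assoc mult.commute mult_1_left v)
  qed
  thus ?thesis unfolding rinv_def by (rule theI')
qed

lemma unit_mult: fixes u w :: "'a::comm_ring_1" assumes "u dvd 1" "w dvd 1" shows "u * w dvd 1"
proof -
  obtain a b where "1 = u * a" "1 = w * b" using assms by (auto elim!: dvdE)
  hence "1 = (u*w) * (a*b)" by (metis mult.assoc mult.left_commute mult_1_right)
  thus ?thesis by (rule dvdI)
qed

lemma rinv_mult: fixes u w :: "'a::comm_ring_1" assumes "u dvd 1" "w dvd 1"
  shows "rinv (u * w) = rinv u * rinv w"
proof -
  have uw: "u * w dvd 1" using assms by (rule unit_mult)
  have "\<exists>!y. (u*w) * y = 1"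
  proof
    show "(u*w) * (rinv u * rinv w) = 1" using rinv_unit[OF assms(1)] rinv_unit[OF assms(2)]
      by (simp add: algebra_simps)
    fix y assume h: "(u*w) * y = 1"
    have "y = (u * rinv u) * (w * rinv w) * y" using rinv_unit[OF assms(1)] rinv_unit[OF assms(2)] by simp
    also have "\<dots> = (rinv u * rinv w) * ((u*w) * y)" by (simp add: algebra_simps)
    finally show "y = rinv u * rinv w" using h by simp
  qed
  moreover have "(u*w) * rinv (u*w) = 1" by (rule rinv_unit[OF uw])
  moreover have "(u*w) * (rinv u * rinv w) = 1" using rinv_unit[OF assms(1)] rinv_unit[OF assms(2)]
      by (simp add: algebra_simps)
  ultimately show ?thesis by blast
qed

lemma rinv_1[simp]: "rinv (1::'a::comm_ring_1) = 1"
  using rinv_unit[of "1::'a"] by simp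

lemma unit_cancel: fixes u :: "'a::comm_ring_1" assumes "u dvd 1" "u * a = u * b" shows "a = b"
proof -
  have "rinv u * (u * a) = rinv u * (u * b)" using assms by simp
  thus ?thesis using rinv_unit[OF assms(1)] by (simp add: algebra_simps)
qed

context
  fixes T :: "'a::comm_ring_1 itself"
  assumes Q: "is_Q_algebra TYPE('a)"
begin

lemma Q_nat_unit: "n > 0 \<Longrightarrow> (of_nat n :: 'a) dvd 1"
  using Q unfolding is_Q_algebra_def by blast

lemma Q_int_unit: "(b::int) > 0 \<Longrightarrow> (of_int b :: 'a) dvd 1"
  using Q_nat_unit[of "nat b"] by simp

lemma of_rat_alg_frac: assumes "b > 0"
  shows "(of_rat_alg (of_int a / of_int b) :: 'a) = of_int a * rinv (of_int b)"
proof -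
  obtain a' b' where qa: "quotient_of (of_int a / of_int b) = (a', b')" by (cases "quotient_of (of_int a / of_int b)")
  have b': "b' > 0" using quotient_of_denom_pos[OF qa] .
  have "of_int a / of_int b = (of_int a' / of_int b' :: rat)" using quotient_of_div[OF qa] .
  hence "of_int a * of_int b' = (of_int a' * of_int b :: rat)" using assms b'
    by (simp add: field_simps)
  hence eq: "a * b' = a' * b" by (metis of_int_eq_iff of_int_mult)
  have ub: "(of_int b :: 'a) dvd 1" "(of_int b' :: 'a) dvd 1" using assms b' Q_int_unit by auto
  have "(of_int b * of_int b') * (of_int a' * rinv (of_int b')) = (of_int b * of_int b') * (of_int a * rinv (of_int b) :: 'a)"
  proof -
    have "(of_int b * of_int b') * (of_int a' * rinv (of_int b')) = of_int b * of_int a' * (of_int b' * rinv (of_int b') :: 'a)"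
      by (simp add: algebra_simps)
    also have "\<dots> = of_int (a' * b)" using rinv_unit[OF ub(2)] by simp
    also have "\<dots> = of_int (a * b')" using eq by simp
    also have "\<dots> = of_int b' * of_int a * (of_int b * rinv (of_int b) :: 'a)" using rinv_unit[OF ub(1)] by simp
    also have "\<dots> = (of_int b * of_int b') * (of_int a * rinv (of_int b))" by (simp add: algebra_simps)
    finally show ?thesis .
  qed
  hence "of_int a' * rinv (of_int b') = (of_int a * rinv (of_int b) :: 'a)"
    by (rule unit_cancel[rotated]) (use ub in \<open>simp add: unit_mult\<close>)
  thus ?thesis unfolding of_rat_alg_def qa by simp
qed

lemma of_rat_alg_repr: obtains a b where "b > 0" "q = of_int a / of_int b"
  "(of_rat_alg q :: 'a) = of_int a * rinv (of_int b)"
proof -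
  obtain a b where qa: "quotient_of q = (a, b)" by (cases "quotient_of q")
  show ?thesis using that[of b a] quotient_of_denom_pos[OF qa] quotient_of_div[OF qa]
    of_rat_alg_frac by auto
qed

lemma of_rat_alg_add: "(of_rat_alg (q + r) :: 'a) = of_rat_alg q + of_rat_alg r"
proof -
  obtain a b where ab: "b > 0" "q = of_int a / of_int b" "(of_rat_alg q :: 'a) = of_int a * rinv (of_int b)"
    by (rule of_rat_alg_repr)
  obtain c d where cd: "d > 0" "r = of_int c / of_int d" "(of_rat_alg r :: 'a) = of_int c * rinv (of_int d)"
    by (rule of_rat_alg_repr)
  have "q + r = of_int (a*d + c*b) / of_int (b*d)" using ab cd by (simp add: field_simps)
  hence "(of_rat_alg (q + r) :: 'a) = of_rat_alg (of_int (a*d + c*b) / of_int (b*d))" by simp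
  also have "\<dots> = of_int (a*d + c*b) * rinv (of_int (b*d))" by (rule of_rat_alg_frac) (use ab cd in simp)
  also have "\<dots> = of_int (a*d + c*b) * (rinv (of_int b) * rinv (of_int d))"
    using rinv_mult[OF Q_int_unit Q_int_unit, of b d] ab cd by simp
  also have "\<dots> = of_int a * rinv (of_int b) * (of_int d * rinv (of_int d)) + of_int c * rinv (of_int d) * (of_int b * rinv (of_int b))"
    by (simp add: algebra_simps)
  also have "\<dots> = of_rat_alg q + of_rat_alg r" using ab cd rinv_unit[OF Q_int_unit] by simp
  finally show ?thesis .
qed

lemma of_rat_alg_mult: "(of_rat_alg (q * r) :: 'a) = of_rat_alg q * of_rat_alg r"
proof -
  obtain a b where ab: "b > 0" "q = of_int a / of_int b" "(of_rat_alg q :: 'a) = of_int a * rinv (of_int b)"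
    by (rule of_rat_alg_repr)
  obtain c d where cd: "d > 0" "r = of_int c / of_int d" "(of_rat_alg r :: 'a) = of_int c * rinv (of_int d)"
    by (rule of_rat_alg_repr)
  have "q * r = of_int (a*c) / of_int (b*d)" using ab cd by (simp add: field_simps)
  hence "(of_rat_alg (q * r) :: 'a) = of_rat_alg (of_int (a*c) / of_int (b*d))" by simp
  also have "\<dots> = of_int (a*c) * rinv (of_int (b*d))" by (rule of_rat_alg_frac) (use ab cd in simp)
  also have "\<dots> = of_int (a*c) * (rinv (of_int b) * rinv (of_int d))"
    using rinv_mult[OF Q_int_unit Q_int_unit, of b d] ab cd by simp
  also have "\<dots> = of_rat_alg q * of_rat_alg r" using ab cd by (simp add: algebra_simps)
  finally show ?thesis .
qed

lemma of_rat_alg_int: "(of_rat_alg (of_int a) :: 'a) = of_int a"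
  using of_rat_alg_frac[of 1 a] by simp

lemma of_rat_alg_0[simp]: "(of_rat_alg 0 :: 'a) = 0"
  using of_rat_alg_int[of 0] by simp

lemma of_rat_alg_1[simp]: "(of_rat_alg 1 :: 'a) = 1"
  using of_rat_alg_int[of 1] by simp

lemma rinv_nat: "n > 0 \<Longrightarrow> (rinv (of_nat n) :: 'a) = of_rat_alg (1 / of_nat n)"
  using of_rat_alg_frac[of "int n" 1] by simp

end


unbundle fps_syntax

lemma exp_nth0[simp]: "fps_exp_alg F $ 0 = 1"
  unfolding fps_exp_alg_def by simp

lemma exp_nth_ext: assumes F0: "F $ 0 = 0" and "n \<le> N"
  shows "fps_exp_alg F $ n = (\<Sum>k\<le>N. (F^k) $ n * rinv (of_nat (fact k)))"
  unfolding fps_exp_alg_def fps_nth_Abs_fps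
  by (rule sum.mono_neutral_left) (use assms startsby_zero_power_prefix[OF F0] in auto)

context
  fixes T :: "'a::comm_ring_1 itself"
  assumes Q: "is_Q_algebra TYPE('a)"
begin

lemma fact_rinv_Suc: "of_nat (Suc j) * rinv (of_nat (fact (Suc j))) = (rinv (of_nat (fact j)) :: 'a)"
proof -
  have u1: "(of_nat (Suc j) :: 'a) dvd 1" by (rule Q_nat_unit[OF Q]) simp
  have u2: "(of_nat (fact j) :: 'a) dvd 1" by (rule Q_nat_unit[OF Q]) simp
  have "rinv (of_nat (fact (Suc j)) :: 'a) = rinv (of_nat (Suc j) * of_nat (fact j))"
    by (simp only: fact_Suc of_nat_mult of_nat_id)
  also have "\<dots> = rinv (of_nat (Suc j)) * rinv (of_nat (fact j))" by (rule rinv_mult[OF u1 u2])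
  finally have e: "rinv (of_nat (fact (Suc j)) :: 'a) = rinv (of_nat (Suc j)) * rinv (of_nat (fact j))" .
  show ?thesis unfolding e using rinv_unit[OF u1] by (metis mult.assoc mult_1_left)
qed

lemma exp_deriv: fixes F :: "'a fps" assumes F0: "F $ 0 = 0"
  shows "fps_deriv (fps_exp_alg F) = fps_deriv F * fps_exp_alg F"
proof (rule fps_ext)
  fix n
  let ?r = "\<lambda>k. rinv (of_nat (fact k)) :: 'a"
  have "fps_deriv (fps_exp_alg F) $ n = of_nat (n+1) * (\<Sum>k\<le>Suc n. (F^k) $ (Suc n) * ?r k)"
    by (simp add: exp_nth_ext[OF F0, of "Suc n" "Suc n"])
  also have "\<dots> = (\<Sum>k\<le>Suc n. fps_deriv (F^k) $ n * ?r k)"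
    by (simp add: sum_distrib_left algebra_simps)
  also have "\<dots> = (\<Sum>k\<le>Suc n. of_nat k * ?r k * (fps_deriv F * F^(k-1)) $ n)"
    by (rule sum.cong) (simp_all add: fps_deriv_power mult.assoc fps_mult_left_const_nth)
  also have "\<dots> = (\<Sum>j\<le>n. ?r j * (fps_deriv F * F^j) $ n)"
    by (subst sum.atMost_Suc_shift) (simp add: fact_rinv_Suc del: of_nat_Suc fact_Suc)
  also have "\<dots> = (\<Sum>j\<le>n. ?r j * (\<Sum>i=0..n. fps_deriv F $ i * (F^j) $ (n - i)))"
    by (simp add: fps_mult_nth)
  also have "\<dots> = (\<Sum>i=0..n. fps_deriv F $ i * (\<Sum>j\<le>n. (F^j) $ (n - i) * ?r j))"
    by (simp add: sum_distrib_left sum.swap[of _ "{..n}"] algebra_simps)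
  also have "\<dots> = (\<Sum>i=0..n. fps_deriv F $ i * fps_exp_alg F $ (n - i))"
    by (rule sum.cong) (simp_all add: exp_nth_ext[OF F0, of "n - _" n])
  also have "\<dots> = (fps_deriv F * fps_exp_alg F) $ n" by (simp add: fps_mult_nth)
  finally show "fps_deriv (fps_exp_alg F) $ n = (fps_deriv F * fps_exp_alg F) $ n" .
qed

lemma ode_unique: fixes E1 E2 G :: "'a fps"
  assumes "fps_deriv E1 = G * E1" "fps_deriv E2 = G * E2" "E1 $ 0 = E2 $ 0"
  shows "E1 = E2"
proof (rule fps_ext)
  fix n show "E1 $ n = E2 $ n"
  proof (induction n rule: less_induct)
    case (less n)
    show ?case
    proof (cases n)
      case 0 thus ?thesis using assms by simp
    next
      case (Suc m)
      have "of_nat (Suc m) * E1 $ Suc m = (G * E1) $ m" using fps_deriv_nth[of E1 m] assms(1) by simp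
      also have "\<dots> = (G * E2) $ m" unfolding fps_mult_nth
        by (rule sum.cong) (use less Suc in auto)
      also have "\<dots> = of_nat (Suc m) * E2 $ Suc m" using fps_deriv_nth[of E2 m] assms(2) by simp
      finally have "of_nat (Suc m) * E1 $ Suc m = of_nat (Suc m) * E2 $ Suc m" .
      hence "E1 $ Suc m = E2 $ Suc m" by (rule unit_cancel[rotated]) (rule Q_nat_unit[OF Q], simp)
      thus ?thesis using Suc by simp
    qed
  qed
qed

lemma exp_add: fixes A B :: "'a fps" assumes "A $ 0 = 0" "B $ 0 = 0"
  shows "fps_exp_alg (A + B) = fps_exp_alg A * fps_exp_alg B"
proof (rule ode_unique[where G = "fps_deriv A + fps_deriv B"])
  show "fps_deriv (fps_exp_alg (A + B)) = (fps_deriv A + fps_deriv B) * fps_exp_alg (A + B)"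
    using exp_deriv[of "A+B"] assms by simp
  show "fps_deriv (fps_exp_alg A * fps_exp_alg B) = (fps_deriv A + fps_deriv B) * (fps_exp_alg A * fps_exp_alg B)"
    using exp_deriv[of A] exp_deriv[of B] assms by (simp add: algebra_simps)
  show "fps_exp_alg (A + B) $ 0 = (fps_exp_alg A * fps_exp_alg B) $ 0" by simp
qed

end


unbundle fps_syntax

lemma psing_nth: "fps_psing p Z $ n = (if p dvd n then Z $ n else 0)"
  unfolding fps_psing_def by simp

lemma preg_eq: "fps_preg p Z = Z - fps_psing p Z"
  by (rule fps_ext) (simp add: fps_preg_def psing_nth)

lemma psing_mult: assumes A: "fps_psing p A = A"
  shows "fps_psing p (A * B) = A * fps_psing p B"
proof (rule fps_ext)
  fix n
  have Az: "\<not> p dvd i \<Longrightarrow> A $ i = 0" for i using arg_cong[OF A, of "\<lambda>F. F $ i"] by (simp add: psing_nth)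
  show "fps_psing p (A * B) $ n = (A * fps_psing p B) $ n"
  proof (cases "p dvd n")
    case True
    have "A $ i * B $ (n - i) = A $ i * (if p dvd n - i then B $ (n - i) else 0)" for i
    proof (cases "p dvd i")
      case True2: True
      with True have "p dvd n - i" by (simp add: dvd_diff_nat)
      thus ?thesis by simp
    qed (simp add: Az)
    thus ?thesis unfolding psing_nth fps_mult_nth using True by simp
  next
    case False
    have "A $ i * (if p dvd n - i then B $ (n - i) else 0) = 0" if "i \<in> {0..n}" for i
    proof (cases "p dvd i \<and> p dvd n - i")
      case True
      hence "p dvd i + (n - i)" by auto
      with that False show ?thesis by simp
    qed (auto simp: Az)
    thus ?thesis unfolding psing_nth fps_mult_nth using False by simp
  qed
qed

lemma psing_1[simp]: "fps_psing p 1 = 1"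
  by (rule fps_ext) (simp add: psing_nth)

lemma psing_add: "fps_psing p (A + B) = fps_psing p A + fps_psing p B"
  by (rule fps_ext) (simp add: psing_nth)

lemma psing_diff: "fps_psing p (A - B) = fps_psing p A - fps_psing p B"
  by (rule fps_ext) (simp add: psing_nth)

lemma psing_psing[simp]: "fps_psing p (fps_psing p A) = fps_psing p A"
  by (rule fps_ext) (simp add: psing_nth)

lemma fps_inv_exists: fixes U :: "'a::comm_ring_1 fps" assumes "U $ 0 = 1"
  shows "U * fps_right_inverse U 1 = 1"
  by (rule fps_right_inverse) (simp add: assms)

lemma quot_eq: fixes U :: "'a::comm_ring_1 fps" assumes "U * Ui = 1"
  shows "fps_quot V U = Ui * V"
  unfolding fps_quot_def
proof (rule the_equality)
  show "U * (Ui * V) = V" using assms by (simp add: mult.assoc[symmetric])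
  fix Y assume "U * Y = V"
  hence "Ui * (U * Y) = Ui * V" by simp
  moreover have "Ui * (U * Y) = (U * Ui) * Y" by (simp add: algebra_simps)
  ultimately show "Y = Ui * V" using assms by simp
qed

lemma part1: fixes X :: "'a::comm_ring_1 fps"
  assumes X0: "X $ 0 = 1" and Ui: "fps_psing p X * Ui = 1"
  shows "fps_psing p (Ui * (X - fps_psing p X)) = 0"
proof -
  let ?U = "fps_psing p X"
  have "fps_psing p (?U * (Ui * X)) = ?U * fps_psing p (Ui * X)"
    by (rule psing_mult) simp
  moreover have "?U * (Ui * X) = X" using Ui by (simp add: mult.assoc[symmetric])
  ultimately have "?U = ?U * fps_psing p (Ui * X)" by simp
  hence "Ui * ?U = Ui * (?U * fps_psing p (Ui * X))" by simp
  moreover have "Ui * (?U * fps_psing p (Ui * X)) = (?U * Ui) * fps_psing p (Ui * X)" by (simp add: algebra_simps)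
  moreover have "Ui * ?U = 1" using Ui by (simp add: mult.commute)
  ultimately have "fps_psing p (Ui * X) = 1" using Ui by simp
  moreover have "Ui * (X - ?U) = Ui * X - 1" using Ui by (simp add: algebra_simps)
  ultimately show ?thesis by (simp add: psing_diff)
qed



unbundle fps_syntax

inductive_set Tset :: "nat \<Rightarrow> 'a::comm_ring_1 fps \<Rightarrow> nat \<Rightarrow> 'a set" for p X n where
  T0: "0 \<in> Tset p X n"
| Tadd: "a \<in> Tset p X n \<Longrightarrow> b \<in> Tset p X n \<Longrightarrow> a + b \<in> Tset p X n"
| Tneg: "a \<in> Tset p X n \<Longrightarrow> - a \<in> Tset p X n"
| Tgen: "is_partition lam n \<Longrightarrow> (\<exists>k\<in>#lam. p dvd k) \<Longrightarrow> (\<Prod>k\<in>#lam. X $ k) \<in> Tset p X n"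

lemma Tsum: "finite A \<Longrightarrow> (\<And>i. i \<in> A \<Longrightarrow> f i \<in> Tset p X n) \<Longrightarrow> sum f A \<in> Tset p X n"
  by (induction A rule: finite_induct) (auto intro: Tset.intros)

lemma Tmult: assumes "a \<in> Tset p X i" "j > 0" shows "a * X $ j \<in> Tset p X (i + j)"
  using assms(1)
proof induction
  case T0 thus ?case by (simp add: Tset.T0)
next
  case (Tadd a b) thus ?case by (simp add: distrib_right Tset.Tadd)
next
  case (Tneg a) thus ?case using Tset.Tneg by fastforce
next
  case (Tgen lam)
  have "is_partition (add_mset j lam) (i + j)" using Tgen(1) assms(2) by (auto simp: is_partition_def)
  moreover have "\<exists>k\<in>#add_mset j lam. p dvd k" using Tgen(2) by auto
  ultimately have "(\<Prod>k\<in>#add_mset j lam. X $ k) \<in> Tset p X (i+j)" by (rule Tset.Tgen)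
  thus ?case by (simp add: mult.commute)
qed

lemma partition_bounds: "is_partition lam n \<Longrightarrow> set_mset lam \<subseteq> {1..n} \<and> size lam \<le> n"
proof (induction lam arbitrary: n)
  case empty thus ?case by simp
next
  case (add x lam)
  hence "is_partition lam (n - x)" "x > 0" "n = x + sum_mset lam" by (auto simp: is_partition_def)
  with add.IH[of "n - x"] show ?case by auto
qed

lemma finite_partitions: "finite {lam. is_partition lam n}"
proof (rule finite_subset)
  show "{lam. is_partition lam n} \<subseteq> (\<Union>m\<le>n. multisets_of_size {1..n} m)"
    using partition_bounds by (fastforce simp: multisets_of_size_def)
  show "finite (\<Union>m\<le>n. multisets_of_size {1..n} m)" by auto
qed

lemma Tfinal: assumes "v \<in> Tset p X n"
  shows "\<exists>a :: nat multiset \<Rightarrow> int. v = (\<Sum>lam\<in>{lam. is_partition lam n \<and> (\<exists>k\<in>#lam. p dvd k)}.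
               of_int (a lam) * (\<Prod>k\<in>#lam. X $ k))"
  using assms
proof induction
  case T0 show ?case by (rule exI[of _ "\<lambda>_. 0"]) simp
next
  case (Tadd a b)
  then obtain f g where "a = (\<Sum>lam\<in>{lam. is_partition lam n \<and> (\<exists>k\<in>#lam. p dvd k)}. of_int (f lam) * (\<Prod>k\<in>#lam. X $ k))"
    "b = (\<Sum>lam\<in>{lam. is_partition lam n \<and> (\<exists>k\<in>#lam. p dvd k)}. of_int (g lam) * (\<Prod>k\<in>#lam. X $ k))" by blast
  thus ?case by (intro exI[of _ "\<lambda>l. f l + g l"]) (simp add: sum.distrib distrib_right)
next
  case (Tneg a)
  then obtain f where "a = (\<Sum>lam\<in>{lam. is_partition lam n \<and> (\<exists>k\<in>#lam. p dvd k)}. of_int (f lam) * (\<Prod>k\<in>#lam. X $ k))" by blast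
  thus ?case by (intro exI[of _ "\<lambda>l. - f l"]) (simp add: sum_negf)
next
  case (Tgen lam0)
  let ?S = "{lam. is_partition lam n \<and> (\<exists>k\<in>#lam. p dvd k)}"
  have fin: "finite ?S" by (rule finite_subset[OF _ finite_partitions[of n]]) auto
  have "lam0 \<in> ?S" using Tgen by auto
  hence "(\<Sum>lam\<in>?S. of_int (if lam = lam0 then 1 else 0) * (\<Prod>k\<in>#lam. X $ k)) = (\<Prod>k\<in>#lam0. X $ k)"
  proof -
    have "(\<Sum>lam\<in>?S. of_int (if lam = lam0 then 1 else 0) * (\<Prod>k\<in>#lam. X $ k)) =
      (\<Sum>lam\<in>?S. if lam = lam0 then (\<Prod>k\<in>#lam. X $ k) else 0)" by (rule sum.cong) auto
    also have "\<dots> = (\<Prod>k\<in>#lam0. X $ k)" using fin \<open>lam0 \<in> ?S\<close> by (simp add: sum.delta)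
    finally show ?thesis .
  qed
  thus ?case by (intro exI[of _ "\<lambda>l. if l = lam0 then 1 else 0"]) simp
qed

lemma part3: fixes X :: "'a::comm_ring_1 fps"
  assumes X0: "X $ 0 = 1" and Ui: "fps_psing p X * Ui = 1" and n: "n \<ge> 1"
  shows "(Ui * (X - fps_psing p X)) $ n - X $ n \<in> Tset p X n"
proof -
  let ?U = "fps_psing p X"
  have U0: "?U $ 0 = 1" using X0 by (simp add: psing_nth)
  have Ui0: "Ui $ 0 = 1" using arg_cong[OF Ui, of "\<lambda>F. F $ 0"] U0 by simp
  have UiT: "Ui $ m \<in> Tset p X m" if "m \<ge> 1" for m
    using that
  proof (induction m rule: less_induct)
    case (less m)
    have "0 = (?U * Ui) $ m" using Ui less.prems by simp
    also have "\<dots> = (\<Sum>i=0..m. ?U $ i * Ui $ (m - i))" by (simp add: fps_mult_nth)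
    also have "\<dots> = Ui $ m + (\<Sum>i=Suc 0..m. ?U $ i * Ui $ (m - i))"
      by (subst sum.atLeast_Suc_atMost) (simp_all add: U0)
    finally have e: "Ui $ m = - (\<Sum>i=Suc 0..m. ?U $ i * Ui $ (m - i))" by (simp add: eq_neg_iff_add_eq_0)
    have "?U $ i * Ui $ (m - i) \<in> Tset p X m" if i: "i \<in> {Suc 0..m}" for i
    proof (cases "i = m")
      case True
      show ?thesis
      proof (cases "p dvd m")
        case True2: True
        have "is_partition {#m#} m" using less.prems by (simp add: is_partition_def)
        hence "(\<Prod>k\<in>#{#m#}. X $ k) \<in> Tset p X m" using True2 by (intro Tset.Tgen) auto
        thus ?thesis using True True2 Ui0 by (simp add: psing_nth)
      qed (use True Ui0 in \<open>simp add: psing_nth Tset.T0\<close>)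
    next
      case False
      with i have "Ui $ (m - i) \<in> Tset p X (m - i)" using less.IH[of "m - i"] by auto
      hence "Ui $ (m - i) * X $ i \<in> Tset p X (m - i + i)" by (rule Tmult) (use i in auto)
      thus ?thesis using i by (auto simp: psing_nth mult.commute Tset.T0)
    qed
    hence "(\<Sum>i=Suc 0..m. ?U $ i * Ui $ (m - i)) \<in> Tset p X m" by (intro Tsum) auto
    thus ?case unfolding e by (rule Tset.Tneg)
  qed
  have "(Ui * ?U) $ n = 0" using Ui n by (simp add: mult.commute)
  hence "(Ui * (X - ?U)) $ n = (Ui * X) $ n" by (simp add: algebra_simps)
  also have "\<dots> = (\<Sum>i=0..n. Ui $ i * X $ (n - i))" by (simp add: fps_mult_nth)
  also have "\<dots> = X $ n + (\<Sum>i=Suc 0..n. Ui $ i * X $ (n - i))"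
    by (subst sum.atLeast_Suc_atMost) (simp_all add: Ui0)
  finally have e: "(Ui * (X - ?U)) $ n - X $ n = (\<Sum>i=Suc 0..n. Ui $ i * X $ (n - i))" by simp
  have "Ui $ i * X $ (n - i) \<in> Tset p X n" if i: "i \<in> {Suc 0..n}" for i
  proof (cases "i = n")
    case True thus ?thesis using UiT[of n] n X0 by simp
  next
    case False
    hence "Ui $ i * X $ (n - i) \<in> Tset p X (i + (n - i))" using i by (intro Tmult UiT) auto
    thus ?thesis using i by simp
  qed
  thus ?thesis unfolding e by (intro Tsum) auto
qed



unbundle fps_syntax

definition mon :: "(nat \<Rightarrow> 'a::comm_ring_1) \<Rightarrow> (nat \<Rightarrow>\<^sub>0 nat) \<Rightarrow> 'a" where
  "mon c m = (\<Prod>i\<in>Poly_Mapping.keys m. c i ^ Poly_Mapping.lookup m i)"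

definition Rpoly :: "nat \<Rightarrow> (nat \<Rightarrow> 'a::comm_ring_1) \<Rightarrow> 'a set" where
  "Rpoly p c = {v. \<exists>P::ratpoly. (\<forall>i\<in>ratpoly_vars P. \<not> p dvd i) \<and> v = ratpoly_eval P c}"

lemma mon_ext: "finite S \<Longrightarrow> Poly_Mapping.keys m \<subseteq> S \<Longrightarrow> mon c m = (\<Prod>i\<in>S. c i ^ Poly_Mapping.lookup m i)"
  unfolding mon_def by (rule prod.mono_neutral_left) (auto simp: in_keys_iff)

lemma mon_add: "mon c (m + m') = mon c m * mon c m'"
proof -
  let ?S = "Poly_Mapping.keys m \<union> Poly_Mapping.keys m'"
  have "mon c (m + m') = (\<Prod>i\<in>?S. c i ^ Poly_Mapping.lookup (m + m') i)"
    by (rule mon_ext) (use keys_add[of m m'] in auto)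
  also have "\<dots> = (\<Prod>i\<in>?S. c i ^ Poly_Mapping.lookup m i) * (\<Prod>i\<in>?S. c i ^ Poly_Mapping.lookup m' i)"
    by (simp add: lookup_add power_add prod.distrib)
  also have "\<dots> = mon c m * mon c m'" using mon_ext[of ?S m c] mon_ext[of ?S m' c] by simp
  finally show ?thesis .
qed

lemma mon_0[simp]: "mon c 0 = 1" by (simp add: mon_def)

lemma mon_single: "mon c (Poly_Mapping.single i 1) = c i" by (simp add: mon_def)

lemma of_rat_alg_0'[simp]: "of_rat_alg 0 = 0"
  by (simp add: of_rat_alg_def)

lemma eval_ext: "finite S \<Longrightarrow> Poly_Mapping.keys P \<subseteq> S \<Longrightarrow>
  ratpoly_eval P c = (\<Sum>m\<in>S. of_rat_alg (Poly_Mapping.lookup P m) * mon c m)"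
  unfolding ratpoly_eval_def mon_def[symmetric] by (rule sum.mono_neutral_left) (auto simp: in_keys_iff)

context
  fixes T :: "'a::comm_ring_1 itself"
  assumes Q: "is_Q_algebra TYPE('a)"
begin

lemma eval_add: "ratpoly_eval (P + P') (c :: nat \<Rightarrow> 'a) = ratpoly_eval P c + ratpoly_eval P' c"
proof -
  let ?S = "Poly_Mapping.keys P \<union> Poly_Mapping.keys P'"
  have "ratpoly_eval (P + P') c = (\<Sum>m\<in>?S. of_rat_alg (Poly_Mapping.lookup (P + P') m) * mon c m)"
    by (rule eval_ext) (use keys_add[of P P'] in auto)
  also have "\<dots> = (\<Sum>m\<in>?S. of_rat_alg (Poly_Mapping.lookup P m) * mon c m) + (\<Sum>m\<in>?S. of_rat_alg (Poly_Mapping.lookup P' m) * mon c m)"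
    by (simp add: lookup_add of_rat_alg_add[OF Q] distrib_right sum.distrib)
  also have "\<dots> = ratpoly_eval P c + ratpoly_eval P' c" using eval_ext[of ?S P c] eval_ext[of ?S P' c] by simp
  finally show ?thesis .
qed

lemma eval_single: "ratpoly_eval (Poly_Mapping.single m q) (c :: nat \<Rightarrow> 'a) = of_rat_alg q * mon c m"
  by (simp add: ratpoly_eval_def mon_def)

lemma R0: "0 \<in> Rpoly p (c :: nat \<Rightarrow> 'a)"
  unfolding Rpoly_def by (rule CollectI, rule exI[of _ 0]) (simp add: ratpoly_eval_def ratpoly_vars_def)

lemma Radd: "a \<in> Rpoly p c \<Longrightarrow> b \<in> Rpoly p c \<Longrightarrow> a + b \<in> Rpoly p (c :: nat \<Rightarrow> 'a)"
  unfolding Rpoly_def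
proof (clarify)
  fix P P' assume "\<forall>i\<in>ratpoly_vars P. \<not> p dvd i" "\<forall>i\<in>ratpoly_vars P'. \<not> p dvd i"
  moreover have "ratpoly_vars (P + P') \<subseteq> ratpoly_vars P \<union> ratpoly_vars P'"
    using keys_add[of P P'] unfolding ratpoly_vars_def by auto
  ultimately show "\<exists>P''. (\<forall>i\<in>ratpoly_vars P''. \<not> p dvd i) \<and> ratpoly_eval P c + ratpoly_eval P' c = ratpoly_eval P'' c"
    by (intro exI[of _ "P + P'"]) (auto simp: eval_add)
qed

lemma Rsum: "finite A \<Longrightarrow> (\<And>i. i \<in> A \<Longrightarrow> f i \<in> Rpoly p c) \<Longrightarrow> sum f A \<in> Rpoly p (c :: nat \<Rightarrow> 'a)"
  by (induction A rule: finite_induct) (auto intro: R0 Radd)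

lemma Rterm: "(\<forall>i\<in>Poly_Mapping.keys m. \<not> p dvd i) \<Longrightarrow> of_rat_alg q * mon c m \<in> Rpoly p (c :: nat \<Rightarrow> 'a)"
  unfolding Rpoly_def
  by (rule CollectI, rule exI[of _ "Poly_Mapping.single m q"]) (auto simp: eval_single ratpoly_vars_def)

lemma Rmult: assumes "a \<in> Rpoly p c" "b \<in> Rpoly p c" shows "a * b \<in> Rpoly p (c :: nat \<Rightarrow> 'a)"
proof -
  obtain P P' where P: "\<forall>i\<in>ratpoly_vars P. \<not> p dvd i" "a = ratpoly_eval P c"
    and P': "\<forall>i\<in>ratpoly_vars P'. \<not> p dvd i" "b = ratpoly_eval P' c"
    using assms unfolding Rpoly_def by auto
  have "a * b = (\<Sum>m\<in>Poly_Mapping.keys P. \<Sum>m'\<in>Poly_Mapping.keys P'.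
      (of_rat_alg (Poly_Mapping.lookup P m) * mon c m) * (of_rat_alg (Poly_Mapping.lookup P' m') * mon c m'))"
    unfolding P(2) P'(2) ratpoly_eval_def mon_def[symmetric] by (rule sum_product)
  also have "\<dots> \<in> Rpoly p c"
  proof (rule Rsum[OF finite_keys], rule Rsum[OF finite_keys])
    fix m m' assume m: "m \<in> Poly_Mapping.keys P" and m': "m' \<in> Poly_Mapping.keys P'"
    have "(of_rat_alg (Poly_Mapping.lookup P m) * mon c m) * (of_rat_alg (Poly_Mapping.lookup P' m') * mon c m')
      = of_rat_alg (Poly_Mapping.lookup P m * Poly_Mapping.lookup P' m') * mon c (m + m')"
      by (simp only: of_rat_alg_mult[OF Q] mon_add mult_ac)
    also have "\<dots> \<in> Rpoly p c"
    proof (rule Rterm, intro ballI)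
      fix i assume "i \<in> Poly_Mapping.keys (m + m')"
      hence "i \<in> Poly_Mapping.keys m \<union> Poly_Mapping.keys m'" using keys_add[of m m'] by (rule subsetD[rotated])
      moreover have "Poly_Mapping.keys m \<subseteq> ratpoly_vars P" using m unfolding ratpoly_vars_def by (rule UN_upper)
      moreover have "Poly_Mapping.keys m' \<subseteq> ratpoly_vars P'" using m' unfolding ratpoly_vars_def by (rule UN_upper)
      ultimately show "\<not> p dvd i" using P(1) P'(1) by blast
    qed
    finally show "(of_rat_alg (Poly_Mapping.lookup P m) * mon c m) * (of_rat_alg (Poly_Mapping.lookup P' m') * mon c m') \<in> Rpoly p c" .
  qed
  finally show ?thesis .
qed

lemma Rconst: "of_rat_alg q \<in> Rpoly p (c :: nat \<Rightarrow> 'a)"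
  using Rterm[of 0 p q c] by simp

lemma Rvar: "\<not> p dvd i \<Longrightarrow> c i \<in> Rpoly p (c :: nat \<Rightarrow> 'a)"
proof -
  assume "\<not> p dvd i"
  hence "of_rat_alg 1 * mon c (Poly_Mapping.single i 1) \<in> Rpoly p c" by (intro Rterm) simp
  thus ?thesis by (simp only: mon_single of_rat_alg_1[OF Q] mult_1_left)
qed

lemma Rneg: assumes "a \<in> Rpoly p c" shows "- a \<in> Rpoly p (c :: nat \<Rightarrow> 'a)"
proof -
  have "of_rat_alg (-1) * a \<in> Rpoly p c" by (rule Rmult[OF Rconst assms])
  thus ?thesis using of_rat_alg_int[OF Q, of "-1"] by simp
qed

lemma Rfps_mult: "(\<And>n. F $ n \<in> Rpoly p c) \<Longrightarrow> (\<And>n. G $ n \<in> Rpoly p c) \<Longrightarrow> (F * G) $ n \<in> Rpoly p (c :: nat \<Rightarrow> 'a)"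
  unfolding fps_mult_nth by (intro Rsum Rmult) auto

lemma Rfps_power: "(\<And>n. F $ n \<in> Rpoly p c) \<Longrightarrow> (F ^ k) $ n \<in> Rpoly p (c :: nat \<Rightarrow> 'a)"
proof (induction k arbitrary: n)
  case 0 thus ?case using Rconst[of 0] Rconst[of 1] by (simp add: of_rat_alg_1[OF Q])
next
  case (Suc k) thus ?case by (simp add: Rfps_mult)
qed

lemma Rone_nth: "(1 :: 'a fps) $ n \<in> Rpoly p c"
  using Rconst[of 0 p c] Rconst[of 1 p c] by (simp add: of_rat_alg_1[OF Q])

lemma Rinv_series: fixes G Qi :: "'a fps"
  assumes G0: "G $ 0 = 1" and GQ: "G * Qi = 1" and GR: "\<And>n. G $ n \<in> Rpoly p c"
  shows "Qi $ n \<in> Rpoly p c"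
proof (induction n rule: less_induct)
  case (less n)
  show ?case
  proof (cases "n = 0")
    case True
    have "Qi $ 0 = 1" using arg_cong[OF GQ, of "\<lambda>F. F $ 0"] G0 by simp
    thus ?thesis using True Rone_nth[of 0] by simp
  next
    case False
    have "0 = (G * Qi) $ n" using GQ False by simp
    also have "\<dots> = (\<Sum>i=0..n. G $ i * Qi $ (n - i))" by (simp add: fps_mult_nth)
    also have "\<dots> = Qi $ n + (\<Sum>i=Suc 0..n. G $ i * Qi $ (n - i))"
      by (subst sum.atLeast_Suc_atMost) (simp_all add: G0)
    finally have e: "Qi $ n = - (\<Sum>i=Suc 0..n. G $ i * Qi $ (n - i))" by (simp add: eq_neg_iff_add_eq_0)
    have "(\<Sum>i=Suc 0..n. G $ i * Qi $ (n - i)) \<in> Rpoly p c"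
      by (intro Rsum Rmult GR less.IH) auto
    thus ?thesis unfolding e by (rule Rneg)
  qed
qed

lemma part2: fixes c :: "nat \<Rightarrow> 'a" and X Ui :: "'a fps"
  assumes X: "X = fps_exp_alg (log_series c)" and Ui: "fps_psing p X * Ui = 1"
  shows "(Ui * (X - fps_psing p X)) $ n \<in> Rpoly p c"
proof -
  define cr where "cr i = (if p dvd i then 0 else c i)" for i
  define cs where "cs i = (if p dvd i then c i else 0)" for i
  define A where "A = log_series cr"
  define B where "B = log_series cs"
  have C: "log_series c = A + B"
    by (rule fps_ext) (simp add: log_series_def A_def B_def cr_def cs_def distrib_right)
  have A0: "A $ 0 = 0" and B0: "B $ 0 = 0" by (simp_all add: A_def B_def log_series_def)
  define ER where "ER = fps_exp_alg A"
  define ES where "ES = fps_exp_alg B"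
  have XE: "X = ER * ES" unfolding X C ER_def ES_def by (rule exp_add[OF Q A0 B0])
  have AR: "A $ n \<in> Rpoly p c" for n
  proof (cases "n = 0")
    case True thus ?thesis using A0 R0 by simp
  next
    case False
    have "cr n \<in> Rpoly p c" unfolding cr_def using R0 Rvar by auto
    moreover have "rinv (of_nat n) = (of_rat_alg (1 / of_nat n) :: 'a)" using False rinv_nat[OF Q] by simp
    ultimately show ?thesis using False by (simp add: A_def log_series_def Rmult Rconst)
  qed
  have ERR: "ER $ n \<in> Rpoly p c" for n
  proof -
    have "rinv (of_nat (fact k)) = (of_rat_alg (1 / of_nat (fact k)) :: 'a)" for k
      using rinv_nat[OF Q, of "fact k"] by simp
    thus ?thesis unfolding ER_def fps_exp_alg_def fps_nth_Abs_fps
      by (intro Rsum Rmult Rfps_power AR) (simp_all add: Rconst)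
  qed
  have Bsing: "fps_psing p B = B"
    by (rule fps_ext) (auto simp: psing_nth B_def log_series_def cs_def)
  have Bpow: "fps_psing p (B ^ k) = B ^ k" for k
  proof (induction k)
    case 0 thus ?case by simp
  next
    case (Suc k) thus ?case using psing_mult[OF Bsing, of "B ^ k"] by simp
  qed
  have ESsing: "fps_psing p ES = ES"
  proof (rule fps_ext)
    fix n
    have "(B ^ k) $ n = 0" if "\<not> p dvd n" for k
      using arg_cong[OF Bpow[of k], of "\<lambda>F. F $ n"] that by (simp add: psing_nth)
    thus "fps_psing p ES $ n = ES $ n" by (simp add: psing_nth ES_def fps_exp_alg_def)
  qed
  define G where "G = fps_psing p ER"
  have U: "fps_psing p X = ES * G" unfolding XE G_def mult.commute[of ER ES] by (rule psing_mult[OF ESsing])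
  have G0: "G $ 0 = 1" by (simp add: G_def psing_nth ER_def)
  have GR: "G $ n \<in> Rpoly p c" for n by (simp add: G_def psing_nth ERR R0)
  define Qi where "Qi = fps_right_inverse G 1"
  have GQ: "G * Qi = 1" unfolding Qi_def by (rule fps_right_inverse) (simp add: G0)
  have QR: "Qi $ n \<in> Rpoly p c" for n by (rule Rinv_series[OF G0 GQ GR])
  have "fps_psing p X * (Qi * ER) = ES * ER * (G * Qi)" unfolding U by (simp add: mult_ac)
  hence UQ: "fps_psing p X * (Qi * ER) = X" using GQ XE by (simp add: mult.commute)
  have "Ui * X = (fps_psing p X * Ui) * (Qi * ER)" by (subst UQ[symmetric]) (simp add: mult_ac)
  hence "Ui * X = Qi * ER" using Ui by simp
  hence "Ui * (X - fps_psing p X) = Qi * ER - 1" using Ui by (simp add: algebra_simps)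
  moreover have "(Qi * ER - 1) $ n \<in> Rpoly p c"
    using Radd[OF Rfps_mult[OF QR ERR] Rneg[OF Rone_nth]] by simp
  ultimately show ?thesis by simp
qed

end



theorem mainTheorem3:
  fixes p :: nat and c :: "nat \<Rightarrow> 'a::comm_ring_1" and X U V Y :: "'a fps"
  assumes "prime p"
    and "is_Q_algebra TYPE('a)"
    and "X = fps_exp_alg (log_series c)"
    and "U = fps_psing p X"
    and "V = fps_preg p X"
    and "Y = fps_quot V U"
  shows "(\<forall>n. p dvd n \<longrightarrow> fps_nth Y n = 0)
    \<and> (\<forall>n. \<exists>P::ratpoly. (\<forall>i\<in>ratpoly_vars P. \<not> p dvd i) \<and> fps_nth Y n = ratpoly_eval P c)
    \<and> (\<forall>n\<ge>1. \<exists>a :: nat multiset \<Rightarrow> int.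
          fps_nth Y n - fps_nth X n =
            (\<Sum>lam\<in>{lam. is_partition lam n \<and> (\<exists>k\<in>#lam. p dvd k)}.
               of_int (a lam) * (\<Prod>k\<in>#lam. fps_nth X k)))"
proof -
  note Q = assms(2)
  have X0: "X $ 0 = 1" using assms(3) by simp
  define Ui where "Ui = fps_right_inverse U 1"
  have U0: "U $ 0 = 1" using X0 assms(4) by (simp add: psing_nth)
  have UUi: "U * Ui = 1" unfolding Ui_def by (rule fps_inv_exists[OF U0])
  have Y1: "Y = Ui * V" using assms(6) quot_eq[OF UUi] by simp
  have Y: "Y = Ui * (X - fps_psing p X)" unfolding Y1 assms(5) preg_eq ..
  have UUi': "fps_psing p X * Ui = 1" using UUi assms(4) by simp
  have P1: "\<forall>n. p dvd n \<longrightarrow> Y $ n = 0"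
  proof (intro allI impI)
    fix n assume "p dvd n"
    have "fps_psing p Y = 0" unfolding Y by (rule part1[OF X0 UUi'])
    hence "fps_psing p Y $ n = 0" by simp
    thus "Y $ n = 0" using \<open>p dvd n\<close> by (simp add: psing_nth)
  qed
  have P2: "\<forall>n. \<exists>P::ratpoly. (\<forall>i\<in>ratpoly_vars P. \<not> p dvd i) \<and> Y $ n = ratpoly_eval P c"
  proof
    fix n
    have "Y $ n \<in> Rpoly p c" unfolding Y by (rule part2[OF Q assms(3) UUi'])
    thus "\<exists>P::ratpoly. (\<forall>i\<in>ratpoly_vars P. \<not> p dvd i) \<and> Y $ n = ratpoly_eval P c"
      unfolding Rpoly_def by blast
  qed
  have P3: "\<forall>n\<ge>1. \<exists>a :: nat multiset \<Rightarrow> int. Y $ n - X $ n =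
            (\<Sum>lam\<in>{lam. is_partition lam n \<and> (\<exists>k\<in>#lam. p dvd k)}.
               of_int (a lam) * (\<Prod>k\<in>#lam. X $ k))"
  proof (intro allI impI)
    fix n :: nat assume "n \<ge> 1"
    have "Y $ n - X $ n \<in> Tset p X n" unfolding Y by (rule part3[OF X0 UUi' \<open>n \<ge> 1\<close>])
    thus "\<exists>a :: nat multiset \<Rightarrow> int. Y $ n - X $ n =
            (\<Sum>lam\<in>{lam. is_partition lam n \<and> (\<exists>k\<in>#lam. p dvd k)}.
               of_int (a lam) * (\<Prod>k\<in>#lam. X $ k))" by (rule Tfinal)
  qed
  show ?thesis using P1 P2 P3 by simp
qed

end
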